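(* Let $n\ge m\ge 0$ be integers with $n-m\equiv 1 \pmod 2$. Then $$\int_{-\infty}^{\infty} f_n(x) f_m(x)\,dx = \frac{1}{2}\binom{n+m+1}{\frac{n+m+1}{2}}.$$
   Context: For $A\subseteq\mathbb{R}$, $\chi_A$ denotes the characteristic function of $A$. Define functions $f_n:\mathbb{R}\to\mathbb{R}$, $n = 0,1,2,\dots$, recursively by $f_0 = \chi_{(-1/2,1/2)}$ and $f_{n+1}(x) = f_n(x+1/2) + f_n(x-1/2)$ for all $x\in\mathbb{R}$. *)

theory Defs
  imports "HOL-Analysis.Analysis"
begin

primrec f :: "nat \<Rightarrow> real \<Rightarrow> real" where
  "f 0 = indicator {-1/2<..<1/2}"
| "f (Suc n) = (\<lambda>x. f n (x + 1/2) + f n (x - 1/2))"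

end

theory Submission imports Defs begin

definition J :: "nat \<Rightarrow> nat \<Rightarrow> real \<Rightarrow> real" where
 "J n k x = indicator {real k - real n/2 - 1/2 <..< real k - real n/2 + 1/2} x"

lemma J_shift1: "J n k (x + 1/2) = J (Suc n) k x"
  unfolding J_def indicator_def greaterThanLessThan_iff of_nat_Suc by (intro arg_cong[where f=of_bool]) (auto simp: field_simps)
lemma J_shift2: "J n k (x - 1/2) = J (Suc n) (Suc k) x"
  unfolding J_def indicator_def greaterThanLessThan_iff of_nat_Suc by (intro arg_cong[where f=of_bool]) (auto simp: field_simps)

lemma f_formula: "f n x = (\<Sum>k\<le>n. real (n choose k) * J n k x)"
proof (induction n arbitrary: x)
  case 0
  then show ?case by (simp add: J_def)
next
  case (Suc n)
  have "f (Suc n) x = (\<Sum>k\<le>n. real (n choose k) * J (Suc n) k x) + (\<Sum>k\<le>n. real (n choose k) * J (Suc n) (Suc k) x)"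
    by (simp add: Suc J_shift1 J_shift2)
  also have "(\<Sum>k\<le>n. real (n choose k) * J (Suc n) (Suc k) x) = (\<Sum>k\<le>Suc n. (if k = 0 then 0 else real (n choose (k - 1))) * J (Suc n) k x)"
    by (simp add: sum.atMost_Suc_shift del: sum.atMost_Suc)
  also have "(\<Sum>k\<le>n. real (n choose k) * J (Suc n) k x) = (\<Sum>k\<le>Suc n. real (n choose k) * J (Suc n) k x)"
    by simp
  also have "(\<Sum>k\<le>Suc n. real (n choose k) * J (Suc n) k x) + (\<Sum>k\<le>Suc n. (if k = 0 then 0 else real (n choose (k - 1))) * J (Suc n) k x)
     = (\<Sum>k\<le>Suc n. real (Suc n choose k) * J (Suc n) k x)"
    unfolding sum.distrib[symmetric]
    by (rule sum.cong) (auto simp: distrib_right[symmetric] split: nat.splits simp: gr0_conv_Suc)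
  finally show ?case .
qed

lemma f_nonneg: "0 \<le> f n x"
  by (induction n arbitrary: x) (auto simp: indicator_def)
lemma f_le: "f n x \<le> 2^n"
proof (induction n arbitrary: x)
  case 0 then show ?case by (simp add: indicator_def)
next
  case (Suc n)
  from Suc[of "x+1/2"] Suc[of "x-1/2"] show ?case by simp
qed
lemma f_supp: "f n x \<noteq> 0 \<Longrightarrow> \<bar>x\<bar> < (real n + 1)/2"
proof (induction n arbitrary: x)
  case 0 then show ?case by (auto simp: indicator_def split: if_splits)
next
  case (Suc n)
  then have "f n (x + 1/2) \<noteq> 0 \<or> f n (x - 1/2) \<noteq> 0" by auto
  then show ?case
  proof
    assume a: "f n (x + 1/2) \<noteq> 0"
    have h: "x + 1/2 < (real n + 1)/2 \<and> -(x + 1/2) < (real n + 1)/2" using Suc.IH[OF a] by (simp only: abs_less_iff)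
    have "x < (real n + 2)/2" using conjunct1[OF h] conjunct2[OF h] by (simp add: field_simps)
    moreover have "-x < (real n + 2)/2" using conjunct1[OF h] conjunct2[OF h] by (simp add: field_simps)
    ultimately show ?thesis by (simp add: abs_less_iff)
  next
    assume a: "f n (x - 1/2) \<noteq> 0"
    have h: "x - 1/2 < (real n + 1)/2 \<and> -(x - 1/2) < (real n + 1)/2" using Suc.IH[OF a] by (simp only: abs_less_iff)
    have "x < (real n + 2)/2" using conjunct1[OF h] conjunct2[OF h] by (simp add: field_simps)
    moreover have "-x < (real n + 2)/2" using conjunct1[OF h] conjunct2[OF h] by (simp add: field_simps)
    ultimately show ?thesis by (simp add: abs_less_iff)
  qed
qed
lemma f_meas[measurable]: "f n \<in> borel_measurable borel"
proof (induction n)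
  case 0 then show ?case by simp
next
  case (Suc n)
  note [measurable] = Suc
  show ?case by simp measurable
qed

lemma integrable_shift: "integrable lborel (\<lambda>x. f n (x + a) * f m (x + b))"
proof (rule Bochner_Integration.integrable_bound[where f="\<lambda>x. (2^n * 2^m :: real) * indicator {-(\<bar>a\<bar> + real n + 1)..(\<bar>a\<bar> + real n + 1)} x"])
  let ?R = "\<bar>a\<bar> + real n + 1"
  show "integrable lborel (\<lambda>x. (2^n * 2^m :: real) * indicator {-?R..?R} x)"
    by (rule borel_integrable_atLeastAtMost) auto
  show "(\<lambda>x. f n (x + a) * f m (x + b)) \<in> borel_measurable lborel" by measurable
  show "AE x in lborel. norm (f n (x + a) * f m (x + b)) \<le> norm ((2^n * 2^m :: real) * indicator {-?R..?R} x)"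
  proof (rule AE_I2)
    fix x
    show "norm (f n (x + a) * f m (x + b)) \<le> norm ((2^n * 2^m :: real) * indicator {-?R..?R} x)"
    proof (cases "f n (x + a) = 0")
      case True then show ?thesis by simp
    next
      case False
      then have "\<bar>x + a\<bar> < (real n + 1)/2" by (rule f_supp)
      moreover have "0 \<le> real n" by simp
      ultimately have "x \<in> {-?R..?R}" unfolding abs_less_iff atLeastAtMost_iff by (cases "a \<ge> 0") (auto simp: abs_if)
      then show ?thesis using f_nonneg[of n "x+a"] f_nonneg[of m "x+b"] f_le[of n "x+a"] f_le[of m "x+b"]
        by (simp add: mult_mono)
    qed
  qed
qed

definition I :: "nat \<Rightarrow> nat \<Rightarrow> real" where
  "I n m = (LINT x|lborel. f n x * f m x)"

lemma translate: "(LINT x|lborel. g x) = (LINT x|lborel. g (x + c))" for g :: "real \<Rightarrow> real"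
  using lborel_integral_real_affine[of 1 g c] by (simp add: add.commute)

lemma I_shift: "I (Suc n) m = I n (Suc m)"
proof -
  have "I (Suc n) m = (LINT x|lborel. f n (x + 1/2) * f m (x + 0)) + (LINT x|lborel. f n (x + (-1/2)) * f m (x + 0))"
    unfolding I_def using integrable_shift[of n "1/2" m 0] integrable_shift[of n "-1/2" m 0]
    by (simp add: distrib_right)
  also have "(LINT x|lborel. f n (x + 1/2) * f m (x + 0)) = (LINT x|lborel. f n (x + 1/2 + (-1/2)) * f m (x + (-1/2)))"
    using translate[of "\<lambda>y. f n (y + 1/2) * f m (y + 0)" "-1/2"] by simp
  also have "(LINT x|lborel. f n (x + (-1/2)) * f m (x + 0)) = (LINT x|lborel. f n (x + (-1/2) + 1/2) * f m (x + 1/2))"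
    using translate[of "\<lambda>y. f n (y + (-1/2)) * f m (y + 0)" "1/2"] by simp
  also have "(LINT x|lborel. f n (x + 1/2 + (-1/2)) * f m (x + (-1/2))) + (LINT x|lborel. f n (x + (-1/2) + 1/2) * f m (x + 1/2))
     = I n (Suc m)"
    unfolding I_def using integrable_shift[of n "0" m "-1/2"] integrable_shift[of n "0" m "1/2"]
    by (simp add: distrib_left add.commute)
  finally show ?thesis .
qed

lemma I_sum: "I n m = I 0 (n + m)"
  by (induction n arbitrary: m) (simp_all add: I_shift)

lemma J_pos: assumes "0 < x" "x < 1/2" shows "J (Suc (2*p)) k x = (if k = p+1 then 1 else 0)"
proof -
  have "J (Suc (2*p)) k x = indicator {real k - real p - 1 <..< real k - real p} x"
    unfolding J_def indicator_def greaterThanLessThan_iff by (intro arg_cong[where f=of_bool]) (auto simp: field_simps of_nat_Suc)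
  also have "\<dots> = (if k = p+1 then 1 else 0)"
  proof (cases "k = p + 1")
    case True then show ?thesis using assms by (simp add: indicator_def)
  next
    case False
    then have "k \<le> p \<or> k \<ge> p + 2" by auto
    then have "real k \<le> real p \<or> real k \<ge> real p + 2" by (auto simp del: of_nat_le_iff simp: of_nat_le_iff[symmetric])
    then show ?thesis using assms False by (auto simp: indicator_def)
  qed
  finally show ?thesis .
qed

lemma J_neg: assumes "-1/2 < x" "x < 0" shows "J (Suc (2*p)) k x = (if k = p then 1 else 0)"
proof -
  have "J (Suc (2*p)) k x = indicator {real k - real p - 1 <..< real k - real p} x"
    unfolding J_def indicator_def greaterThanLessThan_iff by (intro arg_cong[where f=of_bool]) (auto simp: field_simps of_nat_Suc)
  also have "\<dots> = (if k = p then 1 else 0)"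
  proof (cases "k = p")
    case True then show ?thesis using assms by (simp add: indicator_def)
  next
    case False
    then have "k + 1 \<le> p \<or> k \<ge> p + 1" by auto
    then have "real k + 1 \<le> real p \<or> real k \<ge> real p + 1" by (auto simp del: of_nat_le_iff simp: of_nat_le_iff[symmetric])
    then show ?thesis using assms False by (auto simp: indicator_def)
  qed
  finally show ?thesis .
qed

lemma f_pos: assumes "0 < x" "x < 1/2" shows "f (Suc (2*p)) x = real (Suc (2*p) choose (Suc p))"
proof -
  have "f (Suc (2*p)) x = (\<Sum>k\<le>Suc (2*p). if k = p+1 then real (Suc (2*p) choose k) else 0)"
    unfolding f_formula by (rule sum.cong) (simp_all add: J_pos[OF assms] del: binomial_Suc_Suc)
  also have "\<dots> = real (Suc (2*p) choose (p+1))" by (subst sum.delta) auto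
  finally show ?thesis by simp
qed

lemma f_neg: assumes "-1/2 < x" "x < 0" shows "f (Suc (2*p)) x = real (Suc (2*p) choose p)"
proof -
  have "f (Suc (2*p)) x = (\<Sum>k\<le>Suc (2*p). if k = p then real (Suc (2*p) choose k) else 0)"
    unfolding f_formula by (rule sum.cong) (simp_all add: J_neg[OF assms] del: binomial_Suc_Suc)
  also have "\<dots> = real (Suc (2*p) choose p)" by (subst sum.delta) auto
  finally show ?thesis by simp
qed

lemma I0: "I 0 (2*p+1) = (1/2) * real ((2*p+2) choose (p+1))"
proof -
  let ?g = "\<lambda>x. real ((2*p+1) choose p) * indicator {-1/2<..<0::real} x + real ((2*p+1) choose (p+1)) * indicator {0<..<1/2::real} x"
  have "I 0 (2*p+1) = (LINT x|lborel. ?g x)"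
    unfolding I_def
  proof (rule integral_cong_AE)
    show "(\<lambda>x. f 0 x * f (2 * p + 1) x) \<in> borel_measurable lborel" by measurable
    show "?g \<in> borel_measurable lborel" by measurable
    show "AE x in lborel. f 0 x * f (2 * p + 1) x = ?g x"
      using AE_lborel_singleton[of 0]
    proof (rule AE_mp, intro AE_I2 impI)
      fix x :: real assume "x \<noteq> 0"
      then show "f 0 x * f (2 * p + 1) x = ?g x"
        by (cases "x < 0") (auto simp del: f.simps simp: f.simps(1) indicator_def f_pos f_neg)
    qed
  qed
  also have "\<dots> = real ((2*p+1) choose p) * (1/2) + real ((2*p+1) choose (p+1)) * (1/2)"
  proof -
    have e: "emeasure lborel {-1/2<..<0::real} < top"
      using emeasure_lborel_Ioo[of "-1/2" "0::real"] ennreal_less_top[of "1/2"] by (simp only:) simp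
    have e2: "emeasure lborel {0<..<1/2::real} < top"
      using emeasure_lborel_Ioo[of "0" "1/2::real"] ennreal_less_top[of "1/2"] by (simp only:) simp
    have inv: "inverse (2::ennreal) < top" by (simp add: less_top[symmetric])
    have i1: "integrable lborel (\<lambda>x. real ((2*p+1) choose p) * indicator {-1/2<..<0::real} x)"
      by (intro integrable_mult_right integrable_real_indicator e) (auto simp: inv)
    have i2: "integrable lborel (\<lambda>x. real ((2*p+1) choose (p+1)) * indicator {0<..<1/2::real} x)"
      by (intro integrable_mult_right integrable_real_indicator e2) (auto simp: inv)
    show ?thesis using Bochner_Integration.integral_add[OF i1 i2] by (simp del: binomial_Suc_Suc)
  qed
  also have "\<dots> = (1/2) * real ((2*p+2) choose (p+1))"
    by (simp add: algebra_simps numeral_2_eq_2)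
  finally show ?thesis .
qed

theorem mainTheorem6:
  fixes n m :: nat
  assumes "m \<le> n" and "odd (n - m)"
  shows "(LINT x|lborel. f n x * f m x) = (1/2) * real ((n + m + 1) choose ((n + m + 1) div 2))"
proof -
  define p where "p = (n + m) div 2"
  have odd: "odd (n + m)" using assms by (metis dvd_diff_nat le_add_diff_inverse odd_add)
  then have N: "n + m = 2*p + 1" unfolding p_def by presburger
  have "(LINT x|lborel. f n x * f m x) = I 0 (2*p+1)"
    using I_sum[of n m] N by (simp add: I_def)
  also have "\<dots> = (1/2) * real ((2*p+2) choose (p+1))" by (rule I0)
  also have "(2*p+2) = n + m + 1" using N by simp
  also have "p + 1 = (n + m + 1) div 2" using N by simp
  finally show ?thesis .
qed

end
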